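(* Let $n\geq 2$ be an integer and $V$ a $\mathbb{Q}[\operatorname{SL}_2(\mathbb{Z})]$-module of length $\leq n$. Suppose that for all $k = 1,\dots, n$ one has in $\operatorname{End} V$: \[\frac{1}{(n-k)!}\,w x^{n-k} w x^{n-1} = \frac{(-1)^{n-k}}{(k-1)!}\, x^{k-1} w x^{n-1}.\] Suppose further that either $\ker x \cap \ker(x^{n-1}w) = 0$, or $V = \operatorname{im} x + \operatorname{im}(w x^{n-1})$. Then $V \simeq \bigoplus_I \mathbb{Q}\otimes_\mathbb{Z}\operatorname{Sym}^{n-1} \operatorname{Nat} \operatorname{SL}_2(\mathbb{Z})$ as $\mathbb{Q}[\operatorname{SL}_2(\mathbb{Z})]$-modules, for some index set $I$.
   Context: Let $u = \begin{pmatrix}1 & 1 \\ 0 & 1\end{pmatrix}$ and $w = \begin{pmatrix}0 & 1 \\ -1 & 0 \end{pmatrix}$ in $\operatorname{SL}_2(\mathbb{Z})$. The length of an $\operatorname{SL}_2(\mathbb{Z})$-module $V$ is the least $k$ with $(u-1)^k\cdot V = 0$. For a $\mathbb{Q}[\operatorname{SL}_2(\mathbb{Z})]$-module of finite length, $x = \log u = \sum_{k \geq 1} (-1)^{k+1}\frac{(u-1)^k}{k}\in\operatorname{End} V$ (a finite sum). $\mathbb{Q}\otimes_\mathbb{Z}\operatorname{Sym}^{n-1}\operatorname{Nat}\operatorname{SL}_2(\mathbb{Z})$ is the $\mathbb{Q}$-space of homogeneous polynomials of degree $n-1$ in $X,Y$ with the substitution action of $\operatorname{SL}_2(\mathbb{Z})\le\operatorname{SL}_2(\mathbb{Q})$.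 *)

theory Defs
  imports Main "HOL-Computational_Algebra.Polynomial"
begin

text \<open>2x2 integer matrices, written as (a,b,c,d) for the matrix with rows (a b) and (c d).\<close>
type_synonym mat2 = "int \<times> int \<times> int \<times> int"

fun mmul :: "mat2 \<Rightarrow> mat2 \<Rightarrow> mat2" where
  "mmul (a,b,c,d) (a',b',c',d') = (a*a'+b*c', a*b'+b*d', c*a'+d*c', c*b'+d*d')"

definition SL2Z :: "mat2 set" where
  "SL2Z = {(a,b,c,d). a*d - b*c = 1}"

definition mat_one :: mat2 where "mat_one = (1,0,0,1)"
definition mat_u :: mat2 where "mat_u = (1,1,0,1)"
definition mat_w :: mat2 where "mat_w = (0,1,-1,0)"

definition is_rep :: "(rat \<Rightarrow> 'v::ab_group_add \<Rightarrow> 'v) \<Rightarrow> (mat2 \<Rightarrow> 'v \<Rightarrow> 'v) \<Rightarrow> bool" where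
  "is_rep scale \<rho> \<longleftrightarrow> vector_space scale \<and>
     (\<forall>g\<in>SL2Z. Vector_Spaces.linear scale scale (\<rho> g)) \<and>
     \<rho> mat_one = id \<and>
     (\<forall>g\<in>SL2Z. \<forall>h\<in>SL2Z. \<rho> (mmul g h) = \<rho> g \<circ> \<rho> h)"

definition Nop :: "(mat2 \<Rightarrow> 'v::ab_group_add \<Rightarrow> 'v) \<Rightarrow> 'v \<Rightarrow> 'v" where
  "Nop \<rho> v = \<rho> mat_u v - v"

definition length_le :: "(mat2 \<Rightarrow> 'v::ab_group_add \<Rightarrow> 'v) \<Rightarrow> nat \<Rightarrow> bool" where
  "length_le \<rho> n \<longleftrightarrow> (\<forall>v. (Nop \<rho> ^^ n) v = 0)"

text \<open>x = log u = sum_{k>=1} (-1)^(k+1) (u-1)^k / k; for a module of length at most n the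
  terms with k >= n vanish, so summing up to n gives exactly log u.\<close>
definition xop :: "(rat \<Rightarrow> 'v::ab_group_add \<Rightarrow> 'v) \<Rightarrow> (mat2 \<Rightarrow> 'v \<Rightarrow> 'v) \<Rightarrow> nat \<Rightarrow> 'v \<Rightarrow> 'v" where
  "xop scale \<rho> n v = (\<Sum>k\<in>{1..n}. scale ((-1)^(k+1) / of_nat k) ((Nop \<rho> ^^ k) v))"

text \<open>Q (x) Sym^m Nat: homogeneous polynomials P(X,Y) of degree m over Q, encoded by the
  dehomogenisation p(t) = P(t,1), i.e. the rational polynomials of degree <= m
  (coefficient i of p = coefficient of X^i Y^(m-i) of P).\<close>
definition sym_carrier :: "nat \<Rightarrow> rat poly set" where
  "sym_carrier m = {p. degree p \<le> m}"

text \<open>Substitution action: g = (a,b,c,d) sends X to aX+cY and Y to bX+dY (the images of the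
  standard basis vectors e1, e2 of Nat = Z^2), i.e. (g.P)(X,Y) = P(aX+cY, bX+dY).\<close>
fun sym_act :: "nat \<Rightarrow> mat2 \<Rightarrow> rat poly \<Rightarrow> rat poly" where
  "sym_act m (a,b,c,d) p =
     (\<Sum>i\<le>m. smult (coeff p i) ([:of_int c, of_int a:] ^ i * [:of_int d, of_int b:] ^ (m - i)))"

definition dsum_carrier :: "'i set \<Rightarrow> nat \<Rightarrow> ('i \<Rightarrow> rat poly) set" where
  "dsum_carrier I m = {f. (\<forall>i. f i \<in> sym_carrier m) \<and> (\<forall>i. i \<notin> I \<longrightarrow> f i = 0)
                          \<and> finite {i. f i \<noteq> 0}}"

definition dsum_act :: "nat \<Rightarrow> mat2 \<Rightarrow> ('i \<Rightarrow> rat poly) \<Rightarrow> ('i \<Rightarrow> rat poly)" where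
  "dsum_act m g f = (\<lambda>i. sym_act m g (f i))"

definition iso_to_dsum ::
  "(rat \<Rightarrow> 'v::ab_group_add \<Rightarrow> 'v) \<Rightarrow> (mat2 \<Rightarrow> 'v \<Rightarrow> 'v) \<Rightarrow> 'i set \<Rightarrow> nat \<Rightarrow> ('v \<Rightarrow> 'i \<Rightarrow> rat poly) \<Rightarrow> bool" where
  "iso_to_dsum scale \<rho> I m \<phi> \<longleftrightarrow>
     inj \<phi> \<and> range \<phi> = dsum_carrier I m \<and>
     (\<forall>v1 v2. \<phi> (v1 + v2) = (\<lambda>i. \<phi> v1 i + \<phi> v2 i)) \<and>
     (\<forall>c v. \<phi> (scale c v) = (\<lambda>i. smult c (\<phi> v i))) \<and>
     (\<forall>g\<in>SL2Z. \<forall>v. \<phi> (\<rho> g v) = dsum_act m g (\<phi> v))"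

end

theory Submission
  imports Defs
begin


definition Lp :: "nat \<Rightarrow> rat poly" where
  "Lp n = (\<Sum>k\<in>{1..n}. monom ((-1)^(k+1) / of_nat k) k)"
definition Ep :: "nat \<Rightarrow> rat poly" where
  "Ep n = (\<Sum>k<n. smult (1 / fact k) (Lp n ^ k))"

definition eqv :: "nat \<Rightarrow> rat poly \<Rightarrow> rat poly \<Rightarrow> bool" where
  "eqv k p q \<longleftrightarrow> (\<forall>i<k. coeff p i = coeff q i)"

lemma eqv_mult: "eqv k p p' \<Longrightarrow> eqv k q q' \<Longrightarrow> eqv k (p*q) (p'*q')"
  unfolding eqv_def coeff_mult by (auto intro!: sum.cong)

lemma pderiv_sum': "pderiv (sum f A) = (\<Sum>x\<in>A. pderiv (f x))"
  using higher_pderiv_sum[of 1 f A] by simp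

lemma coeff_Lp: "coeff (Lp n) i = (if 1 \<le> i \<and> i \<le> n then (-1)^(i+1) / of_nat i else 0)"
  unfolding Lp_def by (simp add: coeff_sum coeff_monom)

lemma coeff_Lp_pow: "i < k \<Longrightarrow> coeff (Lp n ^ k) i = 0"
proof -
  assume ik: "i < k"
  have "poly (Lp n) 0 = 0" by (simp add: poly_0_coeff_0 coeff_Lp)
  then have "[:0,1:] dvd Lp n" by (simp add: dvd_iff_poly_eq_0)
  then obtain q where q: "Lp n = [:0,1:] * q" by (auto elim: dvdE)
  have "Lp n ^ k = [:0,1:]^k * q ^ k" unfolding q by (rule power_mult_distrib)
  also have "[:0,1:]^k = (monom 1 k :: rat poly)" by (simp add: monom_altdef)
  finally have "Lp n ^ k = monom 1 k * q ^ k" .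
  then show ?thesis using ik by (simp add: coeff_monom_mult)
qed

lemma coeff_pderiv_Lp: "coeff (pderiv (Lp n)) i = (if i < n then (-1)^i else 0)"
  by (simp add: coeff_pderiv coeff_Lp)

lemma eqv_L': "eqv n ([:1,1:] * pderiv (Lp n)) 1"
  unfolding eqv_def
proof (intro allI impI)
  fix i assume i: "i < n"
  show "coeff ([:1,1:] * pderiv (Lp n)) i = coeff 1 i"
  proof (cases i)
    case 0 then show ?thesis using i by (simp add: coeff_pderiv_Lp)
  next
    case (Suc j) then show ?thesis using i by (simp add: coeff_pderiv_Lp)
  qed
qed

lemma Ep_coeff0: "n > 0 \<Longrightarrow> coeff (Ep n) 0 = 1"
proof -
  have "coeff (Ep n) 0 = (\<Sum>k<n. (1 / fact k) * coeff (Lp n ^ k) 0)"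
    by (simp add: Ep_def coeff_sum)
  also have "\<dots> = (\<Sum>k<n. if k = 0 then 1 else 0)"
    by (intro sum.cong) (auto simp: coeff_Lp_pow)
  also assume "n > 0"
  then have "(\<Sum>k<n. if k = 0 then 1 else 0 :: rat) = 1" by (simp add: sum.delta)
  finally show ?thesis .
qed

lemma Ep_deriv: "n > 0 \<Longrightarrow> pderiv (Ep n) = (\<Sum>k<n-1. smult (1 / fact k) (Lp n ^ k)) * pderiv (Lp n)"
proof -
  assume n: "n > 0"
  then obtain n' where n': "n = Suc n'" by (cases n) auto
  have "pderiv (Ep n) = (\<Sum>k<Suc n'. smult (1 / fact k) (pderiv (Lp n ^ k)))"
    unfolding Ep_def n' pderiv_sum' pderiv_smult ..
  also have "\<dots> = (\<Sum>k<n'. smult (1 / fact (Suc k)) (pderiv (Lp n ^ Suc k)))"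
    by (subst sum.lessThan_Suc_shift) simp
  also have "\<dots> = (\<Sum>k<n'. smult (1 / fact k) (Lp n ^ k) * pderiv (Lp n))"
  proof (intro sum.cong refl)
    fix k
    have "smult (1 / fact (Suc k)) (pderiv (Lp n ^ Suc k)) = smult (1 / fact (Suc k) * of_nat (Suc k)) (Lp n ^ k * pderiv (Lp n))"
      by (simp add: pderiv_power_Suc del: power_Suc fact_Suc of_nat_Suc)
    also have "1 / fact (Suc k) * of_nat (Suc k) = (1 / fact k :: rat)"
      by (simp add: fact_Suc del: of_nat_Suc)
    finally show "smult (1 / fact (Suc k)) (pderiv (Lp n ^ Suc k)) = smult (1 / fact k) (Lp n ^ k) * pderiv (Lp n)"
      by simp
  qed
  also have "\<dots> = (\<Sum>k<n-1. smult (1 / fact k) (Lp n ^ k)) * pderiv (Lp n)"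
    by (simp add: sum_distrib_right n')
  finally show ?thesis .
qed

lemma Ep_rec: "n > 0 \<Longrightarrow> i < n - 1 \<Longrightarrow> coeff ([:1,1:] * pderiv (Ep n)) i = coeff (Ep n) i"
proof -
  assume n: "n > 0" and i: "i < n - 1"
  define R where "R = (\<Sum>k<n-1. smult (1 / fact k) (Lp n ^ k))"
  have "[:1,1:] * pderiv (Ep n) = R * ([:1,1:] * pderiv (Lp n))"
    using Ep_deriv[OF n] unfolding R_def by (simp only: mult.commute mult.left_commute)
  moreover have "eqv n (R * ([:1,1:] * pderiv (Lp n))) (R * 1)"
    by (rule eqv_mult[OF _ eqv_L']) (simp add: eqv_def)
  ultimately have 1: "coeff ([:1,1:] * pderiv (Ep n)) i = coeff R i"
    using i by (simp add: eqv_def)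
  obtain n' where n': "n = Suc n'" using n by (cases n) auto
  have "Ep n = R + smult (1 / fact n') (Lp n ^ n')"
    by (simp add: Ep_def R_def n')
  then have "coeff (Ep n) i = coeff R i"
    using i coeff_Lp_pow[of i n' n] by (simp add: n')
  with 1 show ?thesis by simp
qed

lemma Ep_coeff: "n > 0 \<Longrightarrow> i < n \<Longrightarrow> coeff (Ep n) i = coeff [:1,1:] i"
proof (induction i)
  case 0 then show ?case by (simp add: Ep_coeff0)
next
  case (Suc i)
  have r: "coeff ([:1,1:] * pderiv (Ep n)) i = coeff (Ep n) i"
    using Suc.prems by (intro Ep_rec) auto
  have ih: "coeff (Ep n) i = coeff [:1,1:] i" using Suc by auto
  show ?case
  proof (cases i)
    case 0 then show ?thesis using r ih by (simp add: coeff_pderiv)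
  next
    case (Suc j)
    then have "of_nat (Suc (Suc j)) * coeff (Ep n) (Suc (Suc j)) + of_nat (Suc j) * coeff (Ep n) (Suc j) = coeff (Ep n) (Suc j)"
      using r by (simp add: coeff_pderiv)
    then have "of_nat (Suc (Suc j)) * coeff (Ep n) (Suc (Suc j)) = 0"
      using ih Suc by (cases j) (auto simp: algebra_simps)
    then show ?thesis using Suc by (simp del: of_nat_Suc)
  qed
qed



definition Em :: "nat \<Rightarrow> nat \<Rightarrow> rat poly" where
  "Em m j = (if j \<le> m then monom (1 / fact (m - j)) j else 0)"

lemma sym_act_add: "sym_act m g (p + q) = sym_act m g p + sym_act m g q"
  by (cases g) (simp add: sum.distrib smult_add_left)

lemma smult_sum_right: "smult c (sum f A) = (\<Sum>a\<in>A. smult c (f a))"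
  by (induction A rule: infinite_finite_induct) (auto simp: smult_add_right)

lemma sym_act_smult: "sym_act m g (smult c p) = smult c (sym_act m g p)"
  by (cases g) (simp add: smult_sum_right)

lemma sym_act_0: "sym_act m g 0 = 0"
  by (cases g) simp

lemma sym_act_sum: "sym_act m g (sum f A) = (\<Sum>a\<in>A. sym_act m g (f a))"
  by (induction A rule: infinite_finite_induct) (auto simp: sym_act_0 sym_act_add)

lemma sym_act_monom: "j \<le> m \<Longrightarrow> sym_act m (a,b,c,d) (monom e j) =
   smult e ([:of_int c, of_int a:] ^ j * [:of_int d, of_int b:] ^ (m - j))"
proof -
  assume j: "j \<le> m"
  have "\<And>i. smult (coeff (monom e j) i) ([:of_int c, of_int a:] ^ i * [:of_int d, of_int b:] ^ (m - i)) =
     (if i = j then smult e ([:of_int c, of_int a:] ^ j * [:of_int d, of_int b:] ^ (m - j)) else (0::rat poly))"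
    by (auto simp: coeff_monom)
  then show ?thesis using j by (simp add: sum.delta)
qed

lemma degree_sym_act: "degree (sym_act m g p) \<le> m"
proof -
  obtain a b c d where g: "g = (a,b,c,d)" by (cases g) auto
  show ?thesis unfolding g sym_act.simps
  proof (intro degree_sum_le)
    fix i assume "i \<in> {..m}"
    then have "degree ([:of_int c, of_int a:] ^ i * [:of_int d, of_int b:] ^ (m - i) :: rat poly) \<le> i + (m - i)"
      by (intro order.trans[OF degree_mult_le] add_mono order.trans[OF degree_power_le]) auto
    then show "degree (smult (coeff p i) ([:of_int c, of_int a:] ^ i * [:of_int d, of_int b:] ^ (m - i) :: rat poly)) \<le> m"
      using \<open>i \<in> {..m}\<close> by (intro order.trans[OF degree_smult_le]) auto
  qed auto
qed

lemma sym_act_one: "degree p \<le> m \<Longrightarrow> sym_act m mat_one p = p"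
proof -
  assume d: "degree p \<le> m"
  have "sym_act m mat_one p = (\<Sum>i\<le>m. monom (coeff p i) i)"
    by (simp add: mat_one_def monom_altdef one_pCons[symmetric])
  also have "\<dots> = p" using poly_as_sum_of_monoms'[OF d] .
  finally show ?thesis .
qed

lemma coeff_Em: "coeff (Em m j) l = (if j \<le> m \<and> l = j then 1 / fact (m - j) else 0)"
  by (simp add: Em_def coeff_monom)

lemma sym_act_w_Em: "j \<le> m \<Longrightarrow>
  sym_act m mat_w (Em m j) = smult ((-1)^j * fact j / fact (m - j)) (Em m (m - j))"
proof -
  assume j: "j \<le> m"
  have "sym_act m mat_w (Em m j) = smult (1 / fact (m - j)) ([:-1:] ^ j * [:0, 1:] ^ (m - j))"
    using j unfolding mat_w_def Em_def by (simp add: sym_act_monom[of j m 0 1 "-1" 0, simplified])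
  also have "\<dots> = smult ((-1)^j / fact (m - j)) (monom 1 (m - j))"
  proof -
    have "[:- 1::rat:] ^ j = [:(-1)^j:]" by (induction j) auto
    then show ?thesis by (simp add: monom_altdef)
  qed
  also have "\<dots> = smult ((-1)^j * fact j / fact (m - j)) (Em m (m - j))"
    using j by (simp add: Em_def smult_monom)
  finally show ?thesis .
qed

lemma sym_act_u_Em: "j \<le> m \<Longrightarrow>
  sym_act m mat_u (Em m j) = (\<Sum>k\<le>m. smult (1 / fact k) (Em m (j + k)))"
proof -
  assume j: "j \<le> m"
  have "sym_act m mat_u (Em m j) = smult (1 / fact (m - j)) (monom 1 j * [:1, 1:] ^ (m - j))"
    using j unfolding mat_u_def Em_def
    by (simp add: sym_act_monom[of j m 1 1 0 1, simplified]) (simp add: monom_altdef)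
  also have "\<dots> = (\<Sum>k\<le>m. smult (1 / fact k) (Em m (j + k)))"
  proof (rule poly_eqI)
    fix l
    have L: "coeff (smult (1 / fact (m - j)) (monom 1 j * [:1, 1::rat:] ^ (m - j))) l =
      (if j \<le> l \<and> l \<le> m then 1 / (fact (l - j) * fact (m - l)) else 0)"
    proof (cases "j \<le> l \<and> l \<le> m")
      case True
      then have "coeff ([:1, 1:] ^ (m - j)) (l - j) = (of_nat ((m - j) choose (l - j)) :: rat)"
        by (subst coeff_linear_poly_power) auto
      also have "\<dots> = fact (m - j) / (fact (l - j) * fact (m - l))"
        using True by (subst binomial_fact) (auto simp: diff_diff_eq)
      finally have c: "coeff ([:1, 1:] ^ (m - j)) (l - j) = (fact (m - j) / (fact (l - j) * fact (m - l)) :: rat)" .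
      have "1 / fact (m - j) * (fact (m - j) / (fact (l - j) * fact (m - l))) = (1 / (fact (l - j) * fact (m - l)) :: rat)"
        by simp
      have "coeff (smult (1 / fact (m - j)) (monom 1 j * [:1, 1:] ^ (m - j))) l = 1 / fact (m - j) * coeff ([:1, 1::rat:] ^ (m - j)) (l - j)"
        using True by (simp add: coeff_monom_mult)
      also have "\<dots> = 1 / fact (m - j) * (fact (m - j) / (fact (l - j) * fact (m - l)))"
        by (simp only: c)
      also have "\<dots> = 1 / (fact (l - j) * fact (m - l))" by simp
      finally show ?thesis by (simp only: if_P[OF True])
    next
      case False
      moreover
      { assume "j \<le> l" "\<not> l \<le> m"
        have "degree ([:1, 1::rat:] ^ (m - j)) \<le> m - j"
          by (rule order.trans[OF degree_power_le]) simp
        then have "coeff ([:1, 1::rat:] ^ (m - j)) (l - j) = 0"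
          using \<open>\<not> l \<le> m\<close> \<open>j \<le> l\<close> j by (intro coeff_eq_0) linarith }
      ultimately show ?thesis by (auto simp: coeff_monom_mult)
    qed
    have R: "coeff (\<Sum>k\<le>m. smult (1 / fact k) (Em m (j + k))) l =
      (\<Sum>k\<le>m. if k = l - j then (if j \<le> l \<and> l \<le> m then 1 / (fact (l - j) * fact (m - l)) else 0) else 0)"
      by (intro trans[OF coeff_sum] sum.cong) (auto simp: coeff_Em)
    show "coeff (smult (1 / fact (m - j)) (monom 1 j * [:1, 1:] ^ (m - j))) l =
      coeff (\<Sum>k\<le>m. smult (1 / fact k) (Em m (j + k))) l"
      unfolding L R using j by (auto simp: sum.delta)
  qed
  finally show ?thesis .
qed



definition hom :: "nat \<Rightarrow> rat poly \<Rightarrow> rat \<Rightarrow> rat \<Rightarrow> rat" where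
  "hom m q X Y = (\<Sum>i\<le>m. coeff q i * X ^ i * Y ^ (m - i))"

lemma hom_scale: "hom m q (k * U) (k * W) = k ^ m * hom m q U W"
  unfolding hom_def sum_distrib_left
proof (intro sum.cong refl)
  fix i assume "i \<in> {..m}"
  then have "k ^ m = k ^ i * k ^ (m - i)" by (simp flip: power_add)
  then show "coeff q i * (k * U) ^ i * (k * W) ^ (m - i) = k ^ m * (coeff q i * U ^ i * W ^ (m - i))"
    by (simp add: power_mult_distrib)
qed

lemma poly_sym_act: "poly (sym_act m (a,b,c,d) q) t = hom m q (of_int a * t + of_int c) (of_int b * t + of_int d)"
  by (simp add: hom_def poly_sum algebra_simps)

lemma hom_poly: assumes "degree q \<le> m" "Y \<noteq> 0" shows "hom m q X Y = Y ^ m * poly q (X / Y)"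
proof -
  have "hom m q X Y = hom m q (Y * (X / Y)) (Y * 1)" using assms by simp
  also have "\<dots> = Y ^ m * hom m q (X / Y) 1" by (rule hom_scale)
  also have "hom m q (X / Y) 1 = (\<Sum>i\<le>m. coeff q i * (X / Y) ^ i)" by (simp add: hom_def)
  also have "\<dots> = poly q (X / Y)"
    using assms(1) by (simp add: poly_altdef) (intro sum.mono_neutral_right, auto simp: coeff_eq_0)
  finally show ?thesis .
qed

lemma poly_eq_cofinite:
  fixes p q :: "rat poly"
  assumes "finite E" "\<And>t. t \<notin> E \<Longrightarrow> poly p t = poly q t"
  shows "p = q"
proof (rule ccontr)
  assume "p \<noteq> q"
  then have "p - q \<noteq> 0" by simp
  then have "finite {t. poly (p - q) t = 0}" by (rule poly_roots_finite)
  moreover have "UNIV \<subseteq> {t. poly (p - q) t = 0} \<union> E" using assms(2) by auto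
  ultimately have "finite (UNIV :: rat set)" using assms(1) by (meson finite_UnI finite_subset)
  then show False using infinite_UNIV_char_0 by blast
qed

lemma sym_act_mmul:
  assumes bd: "(b, d) \<noteq> (0, 0)"
  shows "sym_act m (mmul (a,b,c,d) h) p = sym_act m (a,b,c,d) (sym_act m h p)"
proof -
  obtain a' b' c' d' where h: "h = (a',b',c',d')" by (cases h) auto
  let ?E = "{t::rat. poly [:of_int d, of_int b:] t = 0}"
  have fin: "finite ?E" by (rule poly_roots_finite) (use bd in auto)
  show ?thesis
  proof (rule poly_eq_cofinite[OF fin])
    fix t assume "t \<notin> ?E"
    then have Y: "of_int b * t + of_int d \<noteq> (0::rat)" by (simp add: algebra_simps)
    define X where "X = of_int a * t + (of_int c :: rat)"
    define Y' where "Y' = of_int b * t + (of_int d :: rat)"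
    have Y'0: "Y' \<noteq> 0" using Y by (simp add: Y'_def)
    have "poly (sym_act m (a,b,c,d) (sym_act m h p)) t = hom m (sym_act m h p) X Y'"
      unfolding X_def Y'_def by (rule poly_sym_act)
    also have "\<dots> = Y' ^ m * poly (sym_act m h p) (X / Y')"
      by (rule hom_poly[OF degree_sym_act Y'0])
    also have "poly (sym_act m h p) (X / Y') = hom m p (of_int a' * (X / Y') + of_int c') (of_int b' * (X / Y') + of_int d')"
      by (simp add: h poly_sym_act del: sym_act.simps)
    also have "Y' ^ m * \<dots> = hom m p (Y' * (of_int a' * (X / Y') + of_int c')) (Y' * (of_int b' * (X / Y') + of_int d'))"
      by (rule hom_scale[symmetric])
    also have "Y' * (of_int a' * (X / Y') + of_int c') = of_int a' * X + of_int c' * Y'"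
      using Y'0 by (simp add: field_simps)
    also have "Y' * (of_int b' * (X / Y') + of_int d') = of_int b' * X + of_int d' * Y'"
      using Y'0 by (simp add: field_simps)
    finally have R: "poly (sym_act m (a,b,c,d) (sym_act m h p)) t = hom m p (of_int a' * X + of_int c' * Y') (of_int b' * X + of_int d' * Y')" .
    have "poly (sym_act m (mmul (a,b,c,d) h) p) t = hom m p (of_int a' * X + of_int c' * Y') (of_int b' * X + of_int d' * Y')"
      by (simp add: h poly_sym_act X_def Y'_def algebra_simps del: sym_act.simps)
    with R show "poly (sym_act m (mmul (a,b,c,d) h) p) t = poly (sym_act m (a,b,c,d) (sym_act m h p)) t" by simp
  qed
qed



lemma mmul_SL2Z: "g \<in> SL2Z \<Longrightarrow> h \<in> SL2Z \<Longrightarrow> mmul g h \<in> SL2Z"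
  by (cases g, cases h) (auto simp: SL2Z_def algebra_simps)

lemma mat_u_SL2Z: "mat_u \<in> SL2Z" and mat_w_SL2Z: "mat_w \<in> SL2Z" and mat_one_SL2Z: "mat_one \<in> SL2Z"
  by (auto simp: SL2Z_def mat_u_def mat_w_def mat_one_def)

lemma SL2Z_induct:
  assumes one: "P mat_one"
    and U: "\<And>g. g \<in> SL2Z \<Longrightarrow> P g \<Longrightarrow> P (mmul mat_u g)"
    and W: "\<And>g. g \<in> SL2Z \<Longrightarrow> P g \<Longrightarrow> P (mmul mat_w g)"
    and g: "g \<in> SL2Z"
  shows "P g"
proof -
  have U': "P (mmul mat_u g) \<and> mmul mat_u g \<in> SL2Z" if "g \<in> SL2Z" "P g" for g
    using U[OF that] mmul_SL2Z[OF mat_u_SL2Z that(1)] by simp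
  have W': "P (mmul mat_w g) \<and> mmul mat_w g \<in> SL2Z" if "g \<in> SL2Z" "P g" for g
    using W[OF that] mmul_SL2Z[OF mat_w_SL2Z that(1)] by simp
  define T where "T k g = (case g of (a,b,c,d) \<Rightarrow> (a + k*c, b + k*d, c, d))" for k :: int and g :: mat2
  have Tsl: "T k g \<in> SL2Z" if "g \<in> SL2Z" for k g
    using that by (cases g) (auto simp: T_def SL2Z_def algebra_simps)
  have Tu: "mmul mat_u (T k g) = T (k + 1) g" for k g
    by (cases g) (simp add: T_def mat_u_def algebra_simps)
  have Tuinv: "mmul mat_w (mmul mat_u (mmul mat_w (mmul mat_u (mmul mat_w (T k g))))) = T (k - 1) g" for k g
    by (cases g) (simp add: T_def mat_u_def mat_w_def algebra_simps)
  have Tstep: "P (T k g)" if "g \<in> SL2Z" "P g" for k g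
  proof (induction k rule: int_induct[where k = 0])
    case base
    have "T 0 g = g" by (cases g) (simp add: T_def)
    then show ?case using that by simp
  next
    case (step1 i)
    then show ?case using U'[OF Tsl[OF that(1)]] Tu by metis
  next
    case (step2 i)
    have "P (mmul mat_w (mmul mat_u (mmul mat_w (mmul mat_u (mmul mat_w (T i g))))))"
      using step2 Tsl[OF that(1)] U' W' by meson
    then show ?case using Tuinv by metis
  qed
  have winv: "P (mmul mat_w (mmul mat_w (mmul mat_w g))) \<and> mmul mat_w (mmul mat_w (mmul mat_w g)) \<in> SL2Z"
    if "g \<in> SL2Z" "P g" for g
    using that W' by meson
  have main: "\<forall>a b c d. (a,b,c,d) \<in> SL2Z \<and> nat \<bar>c\<bar> = N \<longrightarrow> P (a,b,c,d)" for N
  proof (induction N rule: less_induct)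
    case (less N)
    show ?case
    proof (intro allI impI)
      fix a b c d assume H: "(a,b,c,d) \<in> SL2Z \<and> nat \<bar>c\<bar> = N"
      then have det: "a * d - b * c = 1" by (simp add: SL2Z_def)
      show "P (a,b,c,d)"
      proof (cases "c = 0")
        case True
        then have "a * d = 1" using det by simp
        then have "(a = 1 \<and> d = 1) \<or> (a = -1 \<and> d = -1)" using zmult_eq_1_iff by blast
        then show ?thesis
        proof
          assume ad: "a = 1 \<and> d = 1"
          have "(a,b,c,d) = T b mat_one" using ad True by (simp add: T_def mat_one_def)
          then show ?thesis using Tstep[OF mat_one_SL2Z one] by simp
        next
          assume ad: "a = -1 \<and> d = -1"
          have m1: "P (mmul mat_w (mmul mat_w mat_one)) \<and> mmul mat_w (mmul mat_w mat_one) \<in> SL2Z"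
            using W' mat_one_SL2Z one by meson
          have "(a,b,c,d) = T (-b) (mmul mat_w (mmul mat_w mat_one))"
            using ad True by (simp add: T_def mat_one_def mat_w_def)
          then show ?thesis using Tstep m1 by metis
        qed
      next
        case False
        define k where "k = a div c"
        define r where "r = a mod c"
        have ar: "a = k * c + r" by (simp add: k_def r_def)
        have rc: "\<bar>r\<bar> < \<bar>c\<bar>"
        proof (cases "c > 0")
          case True
          then show ?thesis using pos_mod_bound[OF True, of a] pos_mod_sign[OF True, of a] by (simp add: r_def)
        next
          case F: False
          then have c0: "c < 0" using False by simp
          then show ?thesis using neg_mod_bound[OF c0, of a] neg_mod_sign[OF c0, of a] by (simp add: r_def)
        qed
        define g' where "g' = (c, d, -r, -(b - k*d))"
        have g'sl: "g' \<in> SL2Z" using det ar by (simp add: g'_def SL2Z_def algebra_simps)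
        have "P g'" using less.IH[of "nat \<bar>r\<bar>"] rc H g'sl unfolding g'_def by auto
        then have "P (mmul mat_w (mmul mat_w (mmul mat_w g'))) \<and> mmul mat_w (mmul mat_w (mmul mat_w g')) \<in> SL2Z"
          using winv g'sl by blast
        moreover have "T k (mmul mat_w (mmul mat_w (mmul mat_w g'))) = (a,b,c,d)"
          by (simp add: T_def g'_def mat_w_def ar algebra_simps)
        ultimately show ?thesis using Tstep by metis
      qed
    qed
  qed
  obtain a b c d where "g = (a,b,c,d)" by (cases g) auto
  then show ?thesis using main g by blast
qed



locale lem2 =
  fixes scale :: "rat \<Rightarrow> 'v::ab_group_add \<Rightarrow> 'v" and \<rho> :: "mat2 \<Rightarrow> 'v \<Rightarrow> 'v" and n :: nat
  assumes n2: "n \<ge> 2" and rep: "is_rep scale \<rho>" and len: "length_le \<rho> n"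
    and rel: "\<forall>k\<in>{1..n}. \<forall>v.
        scale (1 / fact (n - k)) (\<rho> mat_w ((xop scale \<rho> n ^^ (n - k)) (\<rho> mat_w ((xop scale \<rho> n ^^ (n - 1)) v))))
      = scale ((-1) ^ (n - k) / fact (k - 1)) ((xop scale \<rho> n ^^ (k - 1)) (\<rho> mat_w ((xop scale \<rho> n ^^ (n - 1)) v)))"
    and alt: "(\<forall>v. xop scale \<rho> n v = 0 \<and> (xop scale \<rho> n ^^ (n - 1)) (\<rho> mat_w v) = 0 \<longrightarrow> v = 0)
           \<or> (\<forall>v. \<exists>a b. v = xop scale \<rho> n a + \<rho> mat_w ((xop scale \<rho> n ^^ (n - 1)) b))"
begin

sublocale vector_space scale using rep by (simp add: is_rep_def)

abbreviation "x \<equiv> xop scale \<rho> n"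
abbreviation "w \<equiv> \<rho> mat_w"
abbreviation "N \<equiv> Nop \<rho>"
abbreviation "m \<equiv> n - 1"

definition lin :: "('v \<Rightarrow> 'v) \<Rightarrow> bool" where
  "lin f \<longleftrightarrow> (\<forall>a b. f (a + b) = f a + f b) \<and> (\<forall>c a. f (scale c a) = scale c (f a))"

lemma lin_add: "lin f \<Longrightarrow> f (a + b) = f a + f b" by (simp add: lin_def)
lemma lin_scale: "lin f \<Longrightarrow> f (scale c a) = scale c (f a)" by (simp add: lin_def)
lemma lin_additive: "lin f \<Longrightarrow> additive f" by (simp add: lin_def additive_def)
lemma lin_0: "lin f \<Longrightarrow> f 0 = 0" using additive.zero[OF lin_additive] .
lemma lin_diff: "lin f \<Longrightarrow> f (a - b) = f a - f b" using additive.diff[OF lin_additive] .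
lemma lin_sum: "lin f \<Longrightarrow> f (sum g A) = (\<Sum>i\<in>A. f (g i))" using additive.sum[OF lin_additive] .

lemma lin_comp: "lin f \<Longrightarrow> lin g \<Longrightarrow> lin (\<lambda>v. f (g v))" by (simp add: lin_def)
lemma lin_pow: "lin f \<Longrightarrow> lin (f ^^ k)" by (induction k) (auto simp: lin_def)
lemma lin_id: "lin (\<lambda>v. v)" by (simp add: lin_def)
lemma lin_sumf: "(\<And>i. i \<in> A \<Longrightarrow> lin (F i)) \<Longrightarrow> lin (\<lambda>v. \<Sum>i\<in>A. F i v)"
  by (simp add: lin_def sum.distrib scale_sum_right)
lemma lin_scalef: "lin f \<Longrightarrow> lin (\<lambda>v. scale c (f v))"
  by (simp add: lin_def scale_right_distrib)

lemma lin_rho: "g \<in> SL2Z \<Longrightarrow> lin (\<rho> g)"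
proof -
  assume g: "g \<in> SL2Z"
  then have "Vector_Spaces.linear scale scale (\<rho> g)" using rep by (auto simp: is_rep_def)
  then show ?thesis unfolding Vector_Spaces.linear_iff lin_def by blast
qed

lemma rho_mult: "g \<in> SL2Z \<Longrightarrow> h \<in> SL2Z \<Longrightarrow> \<rho> (mmul g h) v = \<rho> g (\<rho> h v)"
  using rep by (auto simp: is_rep_def)

lemma rho_one: "\<rho> mat_one v = v"
  using rep by (auto simp: is_rep_def)

lemma lin_w: "lin w" by (rule lin_rho[OF mat_w_SL2Z])

lemma lin_N: "lin N"
  using lin_rho[OF mat_u_SL2Z] by (simp add: lin_def Nop_def algebra_simps)

lemma lin_x: "lin x"
  unfolding xop_def[abs_def]
  by (intro lin_sumf lin_scalef lin_pow lin_N)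

lemma w_inj: "w a = w b \<Longrightarrow> a = b"
proof -
  assume "w a = w b"
  then have "w (w (w (w a))) = w (w (w (w b)))" by simp
  moreover have "w (w (w (w v))) = v" for v
  proof -
    have "w (w (w (w v))) = \<rho> (mmul mat_w (mmul mat_w (mmul mat_w mat_w))) v"
      by (simp add: rho_mult mmul_SL2Z mat_w_SL2Z)
    also have "mmul mat_w (mmul mat_w (mmul mat_w mat_w)) = mat_one"
      by (simp add: mat_w_def mat_one_def)
    finally show ?thesis by (simp add: rho_one)
  qed
  ultimately show "a = b" by simp
qed

lemma Npow_n: "k \<ge> n \<Longrightarrow> (N ^^ k) v = 0"
proof -
  assume "k \<ge> n"
  then obtain j where "k = j + n" by (metis add.commute le_add_diff_inverse)
  then have "(N ^^ k) v = (N ^^ j) ((N ^^ n) v)" by (simp add: funpow_add)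
  also have "(N ^^ n) v = 0" using len by (simp add: length_le_def)
  finally show ?thesis using lin_0[OF lin_pow[OF lin_N]] by simp
qed

lemma scale_if: "scale (if P then c else 0) y = (if P then scale c y else 0)" by simp

definition opev :: "rat poly \<Rightarrow> 'v \<Rightarrow> 'v" where
  "opev p v = (\<Sum>i<n. scale (coeff p i) ((N ^^ i) v))"

lemma opev_add: "opev (p + q) v = opev p v + opev q v"
  by (simp add: opev_def scale_left_distrib sum.distrib)

lemma opev_smult: "opev (smult c p) v = scale c (opev p v)"
  by (simp add: opev_def scale_sum_right)

lemma opev_sum: "opev (sum F A) v = (\<Sum>a\<in>A. opev (F a) v)"
proof (induction A rule: infinite_finite_induct)
  case (insert a A) then show ?case by (simp add: opev_add)
qed (auto simp: opev_def)

lemma opev_cong: "(\<And>i. i < n \<Longrightarrow> coeff p i = coeff q i) \<Longrightarrow> opev p v = opev q v"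
  by (simp add: opev_def)

lemma opev_monom: "opev (monom c k) v = scale c ((N ^^ k) v)"
proof (cases "k < n")
  case True then show ?thesis by (simp add: opev_def coeff_monom scale_if sum.delta)
next
  case False then show ?thesis by (simp add: opev_def coeff_monom Npow_n)
qed

lemma lin_opev: "lin (opev p)"
  unfolding opev_def[abs_def] by (intro lin_sumf lin_scalef lin_pow lin_N)

lemma opev_pCons: "opev (pCons a p) v = scale a v + N (opev p v)"
proof -
  obtain n' where n': "n = Suc n'" using n2 by (cases n) auto
  have "opev (pCons a p) v = scale a v + (\<Sum>i<n'. scale (coeff p i) ((N ^^ Suc i) v))"
    unfolding opev_def unfolding n' by (subst sum.lessThan_Suc_shift) simp
  also have "(\<Sum>i<n'. scale (coeff p i) ((N ^^ Suc i) v)) = (\<Sum>i<n. scale (coeff p i) ((N ^^ Suc i) v))"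
    using Npow_n[of "Suc n'"] by (simp add: n')
  also have "\<dots> = N (opev p v)"
    unfolding opev_def by (simp add: lin_sum[OF lin_N] lin_scale[OF lin_N])
  finally show ?thesis .
qed

lemma opev_mult: "opev (p * q) v = opev p (opev q v)"
proof (induction p arbitrary: v rule: pCons_induct)
  case 0 then show ?case by (simp add: opev_def)
next
  case (pCons a p)
  have "opev (pCons a p * q) v = opev (smult a q) v + opev (pCons 0 (p * q)) v"
    by (simp add: opev_add)
  also have "\<dots> = scale a (opev q v) + N (opev p (opev q v))"
    by (simp add: opev_smult opev_pCons pCons.IH)
  also have "\<dots> = opev (pCons a p) (opev q v)"
    by (simp add: opev_pCons)
  finally show ?case .
qed

lemma x_opev: "x v = opev (Lp n) v"
  by (simp add: xop_def Lp_def opev_sum opev_monom)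

lemma xpow_opev: "(x ^^ k) v = opev (Lp n ^ k) v"
proof (induction k arbitrary: v)
  case 0 then show ?case using n2 by (simp add: opev_def of_bool_def scale_if sum.delta)
next
  case (Suc k)
  then show ?case by (simp add: x_opev opev_mult)
qed

lemma xpow_n: "k \<ge> n \<Longrightarrow> (x ^^ k) v = 0"
  by (simp add: xpow_opev opev_def coeff_Lp_pow)

lemma u_exp: "\<rho> mat_u v = (\<Sum>k<n. scale (1 / fact k) ((x ^^ k) v))"
proof -
  have "(\<Sum>k<n. scale (1 / fact k) ((x ^^ k) v)) = opev (Ep n) v"
    by (simp add: Ep_def opev_sum opev_smult xpow_opev)
  also have "\<dots> = opev [:1,1:] v"
    using n2 by (intro opev_cong Ep_coeff) auto
  also have "\<dots> = scale 1 v + N (opev [:1:] v)" by (rule opev_pCons)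
  also have "opev [:1:] v = scale 1 v + N (opev 0 v)" by (rule opev_pCons)
  also have "opev 0 v = 0" by (simp add: opev_def)
  also have "scale 1 v + N (scale 1 v + N 0) = \<rho> mat_u v"
    using lin_0[OF lin_rho[OF mat_u_SL2Z]] by (simp add: lin_0[OF lin_N] Nop_def)
  finally show ?thesis by simp
qed

end


context lem2 begin

definition K :: "'v set" where "K = range (x ^^ m)"
definition cc :: rat where "cc = (-1)^m * fact m"
definition sf :: "nat \<Rightarrow> rat" where "sf j = (-1)^j * fact j / fact (m - j)"

lemma cc_nz: "cc \<noteq> 0" by (simp add: cc_def)

lemma lin_xpow: "lin (x ^^ k)" by (rule lin_pow[OF lin_x])

lemma K_0: "0 \<in> K"
proof -
  have "(x ^^ m) 0 = 0" by (rule lin_0[OF lin_xpow])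
  then show ?thesis unfolding K_def by (metis rangeI)
qed
lemma K_add: "a \<in> K \<Longrightarrow> b \<in> K \<Longrightarrow> a + b \<in> K"
proof -
  assume "a \<in> K" "b \<in> K"
  then obtain v v' where "a = (x ^^ m) v" "b = (x ^^ m) v'" by (auto simp: K_def)
  then have "a + b = (x ^^ m) (v + v')" by (simp add: lin_add[OF lin_xpow])
  then show ?thesis by (simp add: K_def)
qed
lemma K_scale: "a \<in> K \<Longrightarrow> scale c a \<in> K"
proof -
  assume "a \<in> K"
  then obtain v where "a = (x ^^ m) v" by (auto simp: K_def)
  then have "scale c a = (x ^^ m) (scale c v)" by (simp add: lin_scale[OF lin_xpow])
  then show ?thesis by (simp add: K_def)
qed
lemma K_diff: "a \<in> K \<Longrightarrow> b \<in> K \<Longrightarrow> a - b \<in> K"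
proof -
  assume "a \<in> K" "b \<in> K"
  then obtain v v' where "a = (x ^^ m) v" "b = (x ^^ m) v'" by (auto simp: K_def)
  then have "a - b = (x ^^ m) (v - v')" by (simp add: lin_diff[OF lin_xpow])
  then show ?thesis by (simp add: K_def)
qed
lemma K_x: "a \<in> K \<Longrightarrow> x a = 0"
proof -
  assume "a \<in> K"
  then obtain v where "a = (x ^^ m) v" by (auto simp: K_def)
  then have "x a = (x ^^ Suc m) v" by simp
  also have "\<dots> = 0" using n2 by (intro xpow_n) auto
  finally show ?thesis .
qed

lemma w0: "w 0 = 0" by (rule lin_0[OF lin_w])
lemma xpow0: "(x ^^ k) 0 = 0" by (rule lin_0[OF lin_xpow])

lemma Kw: assumes j: "j \<le> m" and a: "a \<in> K"
  shows "w ((x ^^ j) (w a)) = scale (sf j) ((x ^^ (m - j)) (w a))"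
proof -
  obtain v where v: "a = (x ^^ m) v" using a by (auto simp: K_def)
  have k: "n - j \<in> {1..n}" using j n2 by auto
  have "scale (1 / fact (n - (n - j))) (w ((x ^^ (n - (n - j))) (w a)))
      = scale ((-1) ^ (n - (n - j)) / fact (n - j - 1)) ((x ^^ (n - j - 1)) (w a))"
    unfolding v using spec[OF bspec[OF rel k], of v] .
  moreover have "n - (n - j) = j" "n - j - 1 = m - j" using j n2 by auto
  ultimately have e: "scale (1 / fact j) (w ((x ^^ j) (w a))) = scale ((-1) ^ j / fact (m - j)) ((x ^^ (m - j)) (w a))"
    by simp
  have "w ((x ^^ j) (w a)) = scale (fact j) (scale (1 / fact j) (w ((x ^^ j) (w a))))"
    by simp
  also have "\<dots> = scale (sf j) ((x ^^ (m - j)) (w a))"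
    unfolding e by (simp add: sf_def)
  finally show ?thesis .
qed

lemma Kc: assumes a: "a \<in> K" shows "(x ^^ m) (w a) = scale cc a"
proof -
  have "w ((x ^^ m) (w a)) = scale (sf m) ((x ^^ (m - m)) (w a))" by (rule Kw[OF order.refl a])
  also have "\<dots> = w (scale cc a)" by (simp add: sf_def cc_def lin_scale[OF lin_w])
  finally show ?thesis by (rule w_inj)
qed

definition Psi :: "(nat \<Rightarrow> 'v) \<Rightarrow> 'v" where
  "Psi a = (\<Sum>j<n. (x ^^ j) (w (a j)))"

lemma Psi_add: "Psi (\<lambda>j. a j + b j) = Psi a + Psi b"
  by (simp add: Psi_def lin_add[OF lin_w] lin_add[OF lin_xpow] sum.distrib)

lemma Psi_scale: "Psi (\<lambda>j. scale c (a j)) = scale c (Psi a)"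
  by (simp add: Psi_def lin_scale[OF lin_w] lin_scale[OF lin_xpow] scale_sum_right)

lemma Psi_diff: "Psi (\<lambda>j. a j - b j) = Psi a - Psi b"
  by (simp add: Psi_def lin_diff[OF lin_w] lin_diff[OF lin_xpow] sum_subtractf)

lemma Psi_0: "Psi (\<lambda>j. 0) = 0"
  by (simp add: Psi_def w0 xpow0)

lemma Psi_cong: "(\<And>j. j < n \<Longrightarrow> a j = b j) \<Longrightarrow> Psi a = Psi b"
  by (simp add: Psi_def)

lemma Psi_upd: "i < n \<Longrightarrow> Psi (a(i := a i + z)) = Psi a + (x ^^ i) (w z)"
proof -
  assume i: "i < n"
  have "Psi (a(i := a i + z)) = Psi (\<lambda>j. a j + (if j = i then z else 0))"
    by (intro arg_cong[where f = Psi]) auto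
  also have "\<dots> = Psi a + Psi (\<lambda>j. if j = i then z else 0)" by (rule Psi_add)
  also have "Psi (\<lambda>j. if j = i then z else 0) = (x ^^ i) (w z)"
  proof -
    have "Psi (\<lambda>j. if j = i then z else 0) = (\<Sum>j<n. if j = i then (x ^^ i) (w z) else 0)"
      unfolding Psi_def by (intro sum.cong refl) (simp add: w0 xpow0)
    then show ?thesis using i by (simp add: sum.delta)
  qed
  finally show ?thesis .
qed

lemma Psi_single: "i < n \<Longrightarrow> Psi (\<lambda>j. if j = i then z else 0) = (x ^^ i) (w z)"
  using Psi_upd[of i "\<lambda>j. 0" z] by (simp add: Psi_0 fun_upd_def)

lemma xpow_Psi: "(x ^^ k) (Psi a) = (\<Sum>j<n. (x ^^ (k + j)) (w (a j)))"
  by (simp add: Psi_def lin_sum[OF lin_xpow] funpow_add)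

lemma extractK:
  assumes aK: "\<And>j. a j \<in> K" and i: "i < n" and z: "\<And>j. j < i \<Longrightarrow> a j = 0"
  shows "(x ^^ (m - i)) (Psi a) = scale cc (a i)"
proof -
  have "(x ^^ (m - i)) (Psi a) = (\<Sum>j<n. if j = i then scale cc (a i) else 0)"
    unfolding xpow_Psi
  proof (intro sum.cong refl)
    fix j assume j: "j \<in> {..<n}"
    show "(x ^^ (m - i + j)) (w (a j)) = (if j = i then scale cc (a i) else 0)"
    proof (cases "j < i")
      case True then show ?thesis using z by (simp add: w0 xpow0)
    next
      case False
      show ?thesis
      proof (cases "j = i")
        case True then show ?thesis using i Kc[OF aK] by simp
      next
        case False
        then have "m - i + j \<ge> n" using \<open>\<not> j < i\<close> i by auto
        then show ?thesis using False xpow_n by simp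
      qed
    qed
  qed
  also have "\<dots> = scale cc (a i)" using i by (simp add: sum.delta)
  finally show ?thesis .
qed

lemma Psi_unique0:
  assumes aK: "\<And>j. a j \<in> K" and P: "Psi a = 0"
  shows "j < n \<Longrightarrow> a j = 0"
proof -
  have "\<forall>j<i. a j = 0" if "i \<le> n" for i
    using that
  proof (induction i)
    case (Suc i)
    then have z: "\<And>j. j < i \<Longrightarrow> a j = 0" by auto
    have "(x ^^ (m - i)) (Psi a) = scale cc (a i)"
      by (rule extractK[OF aK _ z]) (use Suc.prems in simp)
    then have "scale cc (a i) = 0" using P xpow0 by simp
    then have "a i = 0" using cc_nz by simp
    then show ?case using z less_Suc_eq by auto
  qed simp
  then show "j < n \<Longrightarrow> a j = 0" by auto
qed

lemma Psi_unique:
  assumes "\<And>j. a j \<in> K" "\<And>j. b j \<in> K" "Psi a = Psi b" "j < n"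
  shows "a j = b j"
proof -
  have "Psi (\<lambda>j. a j - b j) = 0" using assms by (simp add: Psi_diff)
  then have "a j - b j = 0" using Psi_unique0[of "\<lambda>j. a j - b j"] assms K_diff by blast
  then show ?thesis by simp
qed

end


context lem2 begin

lemma x0: "x 0 = 0" by (rule lin_0[OF lin_x])

lemma x_Psi_shift:
  assumes a0: "a 0 = 0"
  shows "x (Psi (\<lambda>j. if j < m then a (Suc j) else 0)) = Psi a"
proof -
  have n: "{..<n} = {..<Suc m}" using n2 by simp
  have "x (Psi (\<lambda>j. if j < m then a (Suc j) else 0)) = (\<Sum>j<n. (x ^^ (1 + j)) (w (if j < m then a (Suc j) else 0)))"
    using xpow_Psi[of 1] by simp
  also have "\<dots> = (\<Sum>j<m. (x ^^ (Suc j)) (w (a (Suc j))))"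
    unfolding n by (simp add: w0 xpow0 x0)
  also have "\<dots> = Psi a"
    unfolding Psi_def n by (subst sum.lessThan_Suc_shift) (simp add: a0 w0)
  finally show ?thesis .
qed

lemma xm_w_Psi_shift:
  assumes aK: "\<And>j. a j \<in> K"
  shows "(x ^^ m) (w (Psi (\<lambda>j. if j < m then a (Suc j) else 0))) = 0"
proof -
  have "(x ^^ m) (w (Psi (\<lambda>j. if j < m then a (Suc j) else 0))) =
     (\<Sum>j<n. (x ^^ m) (w ((x ^^ j) (w (if j < m then a (Suc j) else 0)))))"
    unfolding Psi_def by (simp add: lin_sum[OF lin_w] lin_sum[OF lin_xpow])
  also have "\<dots> = (\<Sum>j<n. 0)"
  proof (intro sum.cong refl)
    fix j assume "j \<in> {..<n}"
    show "(x ^^ m) (w ((x ^^ j) (w (if j < m then a (Suc j) else 0)))) = 0"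
    proof (cases "j < m")
      case True
      have "(x ^^ m) (w ((x ^^ j) (w (a (Suc j))))) = (x ^^ m) (scale (sf j) ((x ^^ (m - j)) (w (a (Suc j)))))"
        using Kw[OF _ aK, of j "Suc j"] True by simp
      also have "\<dots> = scale (sf j) ((x ^^ (m + (m - j))) (w (a (Suc j))))"
        by (simp add: lin_scale[OF lin_xpow] funpow_add)
      also have "(x ^^ (m + (m - j))) (w (a (Suc j))) = 0" using True by (intro xpow_n) auto
      finally show ?thesis using True by simp
    next
      case False then show ?thesis by (simp add: w0 xpow0)
    qed
  qed
  finally show ?thesis by simp
qed

lemma exists_alt1:
  assumes A: "\<forall>v. x v = 0 \<and> (x ^^ m) (w v) = 0 \<longrightarrow> v = 0"
  shows "(x ^^ i) v = 0 \<Longrightarrow> \<exists>a. (\<forall>j. a j \<in> K) \<and> v = Psi a"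
proof (induction i arbitrary: v)
  case 0 then show ?case using Psi_0 K_0 by auto
next
  case (Suc i)
  have "(x ^^ i) (x v) = 0" using Suc.prems by (simp add: funpow_Suc_right del: funpow.simps)
  then obtain a where aK: "\<forall>j. a j \<in> K" and xv: "x v = Psi a" using Suc.IH by blast
  have "(x ^^ m) (Psi a) = scale cc (a 0)"
    using extractK[of a 0] aK n2 by simp
  moreover have "(x ^^ m) (x v) = 0"
  proof -
    have "(x ^^ m) (x v) = (x ^^ Suc m) v" by (simp add: funpow_Suc_right del: funpow.simps)
    then show ?thesis using n2 xpow_n[of "Suc m"] by simp
  qed
  ultimately have a0: "a 0 = 0" using xv cc_nz by simp
  define a' where "a' = (\<lambda>j. if j < m then a (Suc j) else 0)"
  have a'K: "\<forall>j. a' j \<in> K" using aK K_0 by (simp add: a'_def)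
  have xa': "x (Psi a') = Psi a" unfolding a'_def by (rule x_Psi_shift[of a, OF a0])
  have wa': "(x ^^ m) (w (Psi a')) = 0" unfolding a'_def by (rule xm_w_Psi_shift) (use aK in auto)
  define v1 where "v1 = v - Psi a'"
  have xv1: "x v1 = 0" by (simp add: v1_def lin_diff[OF lin_x] xa' xv)
  define b where "b = (x ^^ m) (w v1)"
  have bK: "b \<in> K" by (simp add: b_def K_def)
  define v2 where "v2 = v1 - scale (1 / cc) b"
  have "x v2 = 0" by (simp add: v2_def lin_diff[OF lin_x] lin_scale[OF lin_x] xv1 K_x[OF bK])
  moreover have "(x ^^ m) (w v2) = 0"
  proof -
    have "(x ^^ m) (w v2) = (x ^^ m) (w v1) - scale (1 / cc) ((x ^^ m) (w b))"
      unfolding v2_def by (simp only: lin_diff[OF lin_w] lin_diff[OF lin_xpow] lin_scale[OF lin_w]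
        lin_scale[OF lin_xpow])
    also have "\<dots> = b - scale (1 / cc) (scale cc b)" by (simp only: Kc[OF bK] b_def[symmetric])
    finally show ?thesis using cc_nz by simp
  qed
  ultimately have "v2 = 0" using A by blast
  then have v: "v = Psi a' + scale (1 / cc) b" by (simp add: v2_def v1_def algebra_simps)
  define a'' where "a'' = a'(m := a' m + scale (1 / cc^2) b)"
  have "Psi a'' = Psi a' + (x ^^ m) (w (scale (1 / cc^2) b))"
    unfolding a''_def using n2 by (intro Psi_upd) auto
  also have "(x ^^ m) (w (scale (1 / cc^2) b)) = scale (1 / cc) b"
    unfolding Kc[OF K_scale[OF bK]] using cc_nz by (simp add: power2_eq_square)
  finally have "v = Psi a''" using v by simp
  moreover have "\<forall>j. a'' j \<in> K" using a'K K_add K_scale bK by (simp add: a''_def)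
  ultimately show ?case by blast
qed

lemma exists_alt2:
  assumes A: "\<forall>v. \<exists>a b. v = x a + w ((x ^^ m) b)"
  shows "\<exists>y a. (\<forall>j. a j \<in> K) \<and> v = (x ^^ i) y + Psi a"
proof (induction i)
  case 0 then show ?case using Psi_0 K_0 by (intro exI[of _ v] exI[of _ "\<lambda>j. 0"]) auto
next
  case (Suc i)
  then obtain y a where aK: "\<forall>j. a j \<in> K" and v: "v = (x ^^ i) y + Psi a" by blast
  obtain y' b where y: "y = x y' + w ((x ^^ m) b)" using A by blast
  show ?case
  proof (cases "i < n")
    case True
    define a' where "a' = a(i := a i + (x ^^ m) b)"
    have "Psi a' = Psi a + (x ^^ i) (w ((x ^^ m) b))" unfolding a'_def using True by (rule Psi_upd)
    moreover have "(x ^^ i) y = (x ^^ Suc i) y' + (x ^^ i) (w ((x ^^ m) b))"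
      by (simp add: y lin_add[OF lin_xpow] funpow_Suc_right del: funpow.simps)
    ultimately have "v = (x ^^ Suc i) y' + Psi a'" using v by (simp add: algebra_simps)
    moreover have "\<forall>j. a' j \<in> K" using aK K_add by (simp add: a'_def K_def)
    ultimately show ?thesis by blast
  next
    case False
    then have "v = (x ^^ Suc i) y + Psi a" using v xpow_n by (simp add: x0)
    then show ?thesis using aK by blast
  qed
qed

lemma Psi_exists: "\<exists>a. (\<forall>j. a j \<in> K) \<and> v = Psi a"
  using alt
proof
  assume A: "\<forall>v. x v = 0 \<and> (x ^^ m) (w v) = 0 \<longrightarrow> v = 0"
  show ?thesis by (rule exists_alt1[OF A xpow_n[of n]]) simp
next
  assume A: "\<forall>v. \<exists>a b. v = x a + w ((x ^^ m) b)"
  obtain y a where "\<forall>j. a j \<in> K" "v = (x ^^ n) y + Psi a" using exists_alt2[OF A] by blast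
  then show ?thesis using xpow_n[of n] by auto
qed

end


context lem2 begin

definition coord :: "'v \<Rightarrow> nat \<Rightarrow> 'v" where
  "coord v = (SOME a. (\<forall>j. a j \<in> K) \<and> v = Psi a)"

lemma coord_spec: "(\<forall>j. coord v j \<in> K) \<and> v = Psi (coord v)"
  unfolding coord_def using someI_ex[OF Psi_exists[of v]] .

lemma coord_K: "coord v j \<in> K" using coord_spec by blast
lemma Psi_coord: "Psi (coord v) = v" using coord_spec by metis

lemma coord_eq: "(\<And>j. a j \<in> K) \<Longrightarrow> v = Psi a \<Longrightarrow> j < n \<Longrightarrow> coord v j = a j"
  using Psi_unique[of "coord v" a j] coord_K Psi_coord by metis

lemma subspace_K: "subspace K"
  unfolding subspace_def using K_0 K_add K_scale by blast

definition Bs :: "'v set" where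
  "Bs = (SOME B. B \<subseteq> K \<and> independent B \<and> K \<subseteq> span B)"

lemma Bs_spec: "Bs \<subseteq> K \<and> independent Bs \<and> K \<subseteq> span Bs"
proof -
  obtain B where "B \<subseteq> K" "independent B" "K \<subseteq> span B" by (rule maximal_independent_subset)
  then have "\<exists>B. B \<subseteq> K \<and> independent B \<and> K \<subseteq> span B" by blast
  then show ?thesis unfolding Bs_def by (rule someI_ex)
qed

lemma Bs_ind: "independent Bs" using Bs_spec by blast
lemma span_Bs: "span Bs = K"
  using Bs_spec span_minimal[OF _ subspace_K, of Bs] by blast

lemma K_span: "a \<in> K \<Longrightarrow> a \<in> span Bs" using span_Bs by simp

abbreviation rp :: "'v \<Rightarrow> 'v \<Rightarrow> rat" where "rp a b \<equiv> representation Bs a b"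

definition phi :: "'v \<Rightarrow> 'v \<Rightarrow> rat poly" where
  "phi v = (\<lambda>b. \<Sum>j<n. smult (rp (coord v j) b) (Em m j))"

lemma phi_Psi: "(\<And>j. a j \<in> K) \<Longrightarrow> phi (Psi a) = (\<lambda>b. \<Sum>j<n. smult (rp (a j) b) (Em m j))"
proof -
  assume aK: "\<And>j. a j \<in> K"
  show ?thesis unfolding phi_def
  proof (intro ext sum.cong refl)
    fix b j assume "j \<in> {..<n}"
    then have "coord (Psi a) j = a j" using aK by (intro coord_eq) auto
    then show "smult (rp (coord (Psi a) j) b) (Em m j) = smult (rp (a j) b) (Em m j)" by simp
  qed
qed

lemma coord_add: "j < n \<Longrightarrow> coord (v1 + v2) j = coord v1 j + coord v2 j"
  by (rule coord_eq) (auto simp: K_add coord_K Psi_add Psi_coord)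

lemma coord_scale: "j < n \<Longrightarrow> coord (scale c v) j = scale c (coord v j)"
  by (rule coord_eq) (auto simp: K_scale coord_K Psi_scale Psi_coord)

lemma phi_add: "phi (v1 + v2) = (\<lambda>b. phi v1 b + phi v2 b)"
  unfolding phi_def
  by (auto simp: coord_add representation_add[OF Bs_ind K_span[OF coord_K] K_span[OF coord_K]]
      smult_add_left sum.distrib intro!: ext sum.cong)

lemma phi_scale: "phi (scale c v) = (\<lambda>b. smult c (phi v b))"
  unfolding phi_def
  by (auto simp: coord_scale representation_scale[OF Bs_ind K_span[OF coord_K]] smult_sum_right
      intro!: ext sum.cong)

lemma phi_0: "phi 0 = (\<lambda>b. 0)"
  using phi_scale[of 0 0] by simp

lemma phi_sum: "phi (sum f A) = (\<lambda>b. \<Sum>i\<in>A. phi (f i) b)"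
proof (induction A rule: infinite_finite_induct)
  case (insert a A) then show ?case by (simp add: phi_add)
qed (auto simp: phi_0)

lemma phi_diff: "phi (v1 - v2) = (\<lambda>b. phi v1 b - phi v2 b)"
  using phi_add[of v1 "scale (-1) v2"] phi_scale[of "-1" v2] by simp

lemma phi_basic: assumes a: "a \<in> K" shows "phi ((x ^^ l) (w a)) = (\<lambda>b. smult (rp a b) (Em m l))"
proof (cases "l < n")
  case True
  have "phi ((x ^^ l) (w a)) = phi (Psi (\<lambda>j. if j = l then a else 0))"
    using Psi_single[OF True] by simp
  also have "\<dots> = (\<lambda>b. \<Sum>j<n. smult (rp (if j = l then a else 0) b) (Em m j))"
    by (rule phi_Psi) (use a K_0 in auto)
  also have "\<dots> = (\<lambda>b. smult (rp a b) (Em m l))"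
  proof
    fix b
    have "(\<Sum>j<n. smult (rp (if j = l then a else 0) b) (Em m j)) = (\<Sum>j<n. if j = l then smult (rp a b) (Em m l) else 0)"
      by (intro sum.cong refl) (auto simp: representation_zero)
    then show "(\<Sum>j<n. smult (rp (if j = l then a else 0) b) (Em m j)) = smult (rp a b) (Em m l)"
      using True by (simp add: sum.delta)
  qed
  finally show ?thesis .
next
  case False
  then show ?thesis using xpow_n[of l] phi_0 n2 by (auto simp: Em_def)
qed

lemma phi_rho_w: "phi (w v) = dsum_act m mat_w (phi v)"
proof -
  define a where "a = coord v"
  have aK: "\<And>j. a j \<in> K" by (simp add: a_def coord_K)
  have "w v = w (Psi a)" by (simp add: a_def Psi_coord)
  also have "\<dots> = (\<Sum>j<n. scale (sf j) ((x ^^ (m - j)) (w (a j))))"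
    unfolding Psi_def using aK by (simp add: lin_sum[OF lin_w] Kw)
  finally have "phi (w v) = (\<lambda>b. \<Sum>j<n. smult (sf j) (smult (rp (a j) b) (Em m (m - j))))"
    by (simp add: phi_sum phi_scale phi_basic[OF aK])
  also have "\<dots> = dsum_act m mat_w (phi v)"
    unfolding dsum_act_def phi_def a_def[symmetric]
    by (auto simp: sym_act_sum sym_act_smult sym_act_w_Em sf_def mult_ac intro!: ext sum.cong)
  finally show ?thesis .
qed

lemma phi_rho_u: "phi (\<rho> mat_u v) = dsum_act m mat_u (phi v)"
proof -
  define a where "a = coord v"
  have aK: "\<And>j. a j \<in> K" by (simp add: a_def coord_K)
  have "\<rho> mat_u v = (\<Sum>k<n. scale (1 / fact k) (\<Sum>j<n. (x ^^ (k + j)) (w (a j))))"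
  proof -
    have v: "Psi a = v" by (simp add: a_def Psi_coord)
    have "\<And>k. (x ^^ k) v = (\<Sum>j<n. (x ^^ (k + j)) (w (a j)))"
      using xpow_Psi v by metis
    then show ?thesis by (simp only: u_exp)
  qed
  then have "phi (\<rho> mat_u v) = (\<lambda>b. \<Sum>k<n. smult (1 / fact k) (\<Sum>j<n. smult (rp (a j) b) (Em m (k + j))))"
    by (simp add: phi_sum phi_scale phi_basic[OF aK])
  also have "\<dots> = dsum_act m mat_u (phi v)"
  proof
    fix b
    have nm: "{..<n} = {..m}" using n2 by auto
    have "dsum_act m mat_u (phi v) b = (\<Sum>j<n. smult (rp (a j) b) (\<Sum>k\<le>m. smult (1 / fact k) (Em m (j + k))))"
      unfolding dsum_act_def phi_def a_def[symmetric]
      by (auto simp: sym_act_sum sym_act_smult sym_act_u_Em intro!: sum.cong)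
    also have "\<dots> = (\<Sum>j<n. \<Sum>k<n. smult (1 / fact k) (smult (rp (a j) b) (Em m (k + j))))"
      unfolding nm by (simp add: smult_sum_right add.commute mult.commute)
    also have "\<dots> = (\<Sum>k<n. smult (1 / fact k) (\<Sum>j<n. smult (rp (a j) b) (Em m (k + j))))"
      by (subst sum.swap) (simp add: smult_sum_right)
    finally show "(\<Sum>k<n. smult (1 / fact k) (\<Sum>j<n. smult (rp (a j) b) (Em m (k + j)))) = dsum_act m mat_u (phi v) b"
      by simp
  qed
  finally show ?thesis .
qed

end


context lem2 begin

lemma degree_Em: "degree (Em m j) \<le> m"
  by (auto simp: Em_def degree_monom_eq intro: order.trans[OF degree_monom_le])

lemma degree_phi: "degree (phi v b) \<le> m"
  unfolding phi_def
  by (intro degree_sum_le finite_lessThan order.trans[OF degree_smult_le degree_Em])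

lemma coeff_Em_sum: "i < n \<Longrightarrow> coeff (\<Sum>j<n. smult (c j) (Em m j)) i = c i / fact (m - i)"
proof -
  assume i: "i < n"
  have "coeff (\<Sum>j<n. smult (c j) (Em m j)) i = (\<Sum>j<n. if j = i then c i / fact (m - i) else 0)"
    unfolding coeff_sum using i by (intro sum.cong refl) (auto simp: coeff_Em)
  also have "\<dots> = c i / fact (m - i)" using i by simp
  finally show ?thesis .
qed

lemma phi_zero: "phi v = (\<lambda>b. 0) \<Longrightarrow> v = 0"
proof -
  assume P: "phi v = (\<lambda>b. 0)"
  have "coord v j = 0" if j: "j < n" for j
  proof -
    have "rp (coord v j) b = 0" for b
    proof -
      have "coeff (phi v b) j = rp (coord v j) b / fact (m - j)"
        unfolding phi_def using j by (rule coeff_Em_sum)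
      then show ?thesis using P by simp
    qed
    then have "{b. rp (coord v j) b \<noteq> 0} = {}" by simp
    then show ?thesis using sum_nonzero_representation_eq[OF Bs_ind K_span[OF coord_K[of v j]]] by simp
  qed
  then have "Psi (coord v) = Psi (\<lambda>j. 0)" by (intro Psi_cong) auto
  then show ?thesis by (simp add: Psi_coord Psi_0)
qed

lemma phi_inj: "inj phi"
proof (rule injI)
  fix v1 v2 assume "phi v1 = phi v2"
  then have "phi (v1 - v2) = (\<lambda>b. 0)" by (simp add: phi_diff)
  then have "v1 - v2 = 0" by (rule phi_zero)
  then show "v1 = v2" by simp
qed

lemma phi_carrier: "phi v \<in> dsum_carrier Bs m"
proof -
  have "phi v b = 0" if "b \<notin> Bs" for b
  proof -
    have "rp (coord v j) b = 0" for j using that representation_ne_zero by blast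
    then show ?thesis by (simp add: phi_def)
  qed
  moreover have "finite {b. phi v b \<noteq> 0}"
  proof (rule finite_subset)
    show "{b. phi v b \<noteq> 0} \<subseteq> (\<Union>j<n. {b. rp (coord v j) b \<noteq> 0})"
      by (auto simp: phi_def intro: ccontr)
    show "finite (\<Union>j<n. {b. rp (coord v j) b \<noteq> 0})" by (simp add: finite_representation)
  qed
  ultimately show ?thesis using degree_phi by (auto simp: dsum_carrier_def sym_carrier_def)
qed

lemma Em_expand: "degree p \<le> m \<Longrightarrow> (\<Sum>j<n. smult (coeff p j * fact (m - j)) (Em m j)) = p"
proof -
  assume d: "degree p \<le> m"
  have nm: "{..<n} = {..m}" using n2 by auto
  have "(\<Sum>j<n. smult (coeff p j * fact (m - j)) (Em m j)) = (\<Sum>j\<le>m. monom (coeff p j) j)"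
    unfolding nm by (intro sum.cong refl) (simp add: Em_def smult_monom)
  also have "\<dots> = p" using poly_as_sum_of_monoms'[OF d] .
  finally show ?thesis .
qed

lemma phi_surj: assumes f: "f \<in> dsum_carrier Bs m" shows "f \<in> range phi"
proof -
  define S where "S = {b. f b \<noteq> 0}"
  have S: "finite S" "S \<subseteq> Bs" using f by (auto simp: dsum_carrier_def S_def)
  define a where "a j = (\<Sum>b\<in>S. scale (coeff (f b) j * fact (m - j)) b)" for j
  have aspan: "a j \<in> span Bs" for j
    unfolding a_def using S by (intro span_sum span_scale span_base) auto
  have aK: "a j \<in> K" for j using aspan span_Bs by simp
  have rpa: "rp (a j) b' = coeff (f b') j * fact (m - j)" for j b'
  proof -
    have "rp (a j) b' = (\<Sum>b\<in>S. coeff (f b) j * fact (m - j) * rp b b')"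
      unfolding a_def
    proof (subst representation_sum[OF Bs_ind])
      show "\<And>i. i \<in> S \<Longrightarrow> scale (coeff (f i) j * fact (m - j)) i \<in> span Bs"
        using S by (auto intro: span_scale span_base)
      show "(\<Sum>i\<in>S. rp (scale (coeff (f i) j * fact (m - j)) i) b') = (\<Sum>b\<in>S. coeff (f b) j * fact (m - j) * rp b b')"
      proof (intro sum.cong refl)
        fix b assume "b \<in> S"
        then have "b \<in> span Bs" using S by (auto intro: span_base)
        then show "rp (scale (coeff (f b) j * fact (m - j)) b) b' = coeff (f b) j * fact (m - j) * rp b b'"
          by (simp add: representation_scale[OF Bs_ind])
      qed
    qed
    also have "\<dots> = (\<Sum>b\<in>S. if b = b' then coeff (f b') j * fact (m - j) else 0)"
      using S by (intro sum.cong refl) (auto simp: representation_basis[OF Bs_ind])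
    also have "\<dots> = coeff (f b') j * fact (m - j)"
      using S by (simp add: sum.delta' S_def)
    finally show ?thesis .
  qed
  have "phi (Psi a) = f"
  proof
    fix b
    have "phi (Psi a) b = (\<Sum>j<n. smult (coeff (f b) j * fact (m - j)) (Em m j))"
      by (simp add: phi_Psi aK rpa)
    also have "\<dots> = f b" using f by (intro Em_expand) (auto simp: dsum_carrier_def sym_carrier_def)
    finally show "phi (Psi a) b = f b" .
  qed
  then show ?thesis by (metis rangeI)
qed

lemma phi_equiv_all: assumes g: "g \<in> SL2Z" shows "\<forall>v. phi (\<rho> g v) = dsum_act m g (phi v)"
proof (rule SL2Z_induct[where P = "\<lambda>g. \<forall>v. phi (\<rho> g v) = dsum_act m g (phi v)", OF _ _ _ g])
  show "\<forall>v. phi (\<rho> mat_one v) = dsum_act m mat_one (phi v)"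
    using degree_phi by (simp add: rho_one dsum_act_def sym_act_one)
next
  fix g assume g: "g \<in> SL2Z" and IH: "\<forall>v. phi (\<rho> g v) = dsum_act m g (phi v)"
  show "\<forall>v. phi (\<rho> (mmul mat_u g) v) = dsum_act m (mmul mat_u g) (phi v)"
  proof
    fix v
    have "phi (\<rho> (mmul mat_u g) v) = phi (\<rho> mat_u (\<rho> g v))" using g by (simp add: rho_mult mat_u_SL2Z)
    also have "\<dots> = dsum_act m mat_u (dsum_act m g (phi v))" by (simp add: phi_rho_u IH)
    also have "\<dots> = dsum_act m (mmul mat_u g) (phi v)"
      unfolding dsum_act_def mat_u_def by (simp add: sym_act_mmul del: sym_act.simps mmul.simps)
    finally show "phi (\<rho> (mmul mat_u g) v) = dsum_act m (mmul mat_u g) (phi v)" .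
  qed
next
  fix g assume g: "g \<in> SL2Z" and IH: "\<forall>v. phi (\<rho> g v) = dsum_act m g (phi v)"
  show "\<forall>v. phi (\<rho> (mmul mat_w g) v) = dsum_act m (mmul mat_w g) (phi v)"
  proof
    fix v
    have "phi (\<rho> (mmul mat_w g) v) = phi (\<rho> mat_w (\<rho> g v))" using g by (simp add: rho_mult mat_w_SL2Z)
    also have "\<dots> = dsum_act m mat_w (dsum_act m g (phi v))" by (simp add: phi_rho_w IH)
    also have "\<dots> = dsum_act m (mmul mat_w g) (phi v)"
      unfolding dsum_act_def mat_w_def by (simp add: sym_act_mmul del: sym_act.simps mmul.simps)
    finally show "phi (\<rho> (mmul mat_w g) v) = dsum_act m (mmul mat_w g) (phi v)" .
  qed
qed

lemma phi_equiv: "g \<in> SL2Z \<Longrightarrow> phi (\<rho> g v) = dsum_act m g (phi v)"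
  using phi_equiv_all by blast

theorem main: "\<exists>(I :: 'v set) \<phi>. iso_to_dsum scale \<rho> I m \<phi>"
proof (intro exI)
  show "iso_to_dsum scale \<rho> Bs m phi"
    unfolding iso_to_dsum_def
    using phi_inj phi_carrier phi_surj phi_add phi_scale phi_equiv by blast
qed

end
theorem lemma2:
  fixes scale :: "rat \<Rightarrow> 'v::ab_group_add \<Rightarrow> 'v"
    and \<rho> :: "mat2 \<Rightarrow> 'v \<Rightarrow> 'v"
    and n :: nat
  defines "x \<equiv> xop scale \<rho> n"
    and "w \<equiv> \<rho> mat_w"
  assumes n2: "n \<ge> 2"
    and rep: "is_rep scale \<rho>"
    and len: "length_le \<rho> n"
    and rel: "\<forall>k\<in>{1..n}. \<forall>v.
        scale (1 / fact (n - k)) (w ((x ^^ (n - k)) (w ((x ^^ (n - 1)) v))))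
      = scale ((-1) ^ (n - k) / fact (k - 1)) ((x ^^ (k - 1)) (w ((x ^^ (n - 1)) v)))"
    and alt: "(\<forall>v. x v = 0 \<and> (x ^^ (n - 1)) (w v) = 0 \<longrightarrow> v = 0)
           \<or> (\<forall>v. \<exists>a b. v = x a + w ((x ^^ (n - 1)) b))"
  shows "\<exists>(I :: 'v set) \<phi>. iso_to_dsum scale \<rho> I (n - 1) \<phi>"
proof -
  interpret L: lem2 scale \<rho> n
    using n2 rep len rel alt unfolding x_def w_def by (unfold_locales) auto
  show ?thesis by (rule L.main)
qed

end
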